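(* Let $n \ge 1$ and let $N$ be a $\lambda$-term such that $N a_1 a_2 \ldots a_n =_\beta a_1 a_2 \ldots a_n (N a_1 a_2 \ldots a_n)$ for distinct variables $a_1,\dots,a_n$ not free in $N$. Then $N\mathbf{I}\cdots\mathbf{I}$, with $n-1$ copies of $\mathbf{I}\equiv\lambda x.x$, is a fixed point combinator.
   Context: Untyped $\lambda$-calculus modulo $\alpha$-conversion; application associates to the left, so $a_1a_2\ldots a_n(P)$ means $(\cdots(a_1a_2)\cdots a_n)P$. A term $Y$ is a fixed point combinator if $Yx =_\beta x(Yx)$ for a variable $x$ not free in $Y$. *)

theory Defs
  imports Main
begin

text \<open>Untyped lambda terms in de Bruijn notation (alpha-conversion is built in).
  Free variables are the loose indices; a variable "a" is represented by Var a
  occurring outside all binders.\<close>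

datatype dB = Var nat | App dB dB | Abs dB

primrec lift :: "dB \<Rightarrow> nat \<Rightarrow> dB" where
  "lift (Var i) k = (if i < k then Var i else Var (i + 1))"
| "lift (App s t) k = App (lift s k) (lift t k)"
| "lift (Abs s) k = Abs (lift s (k + 1))"

primrec subst :: "dB \<Rightarrow> dB \<Rightarrow> nat \<Rightarrow> dB" where
  "subst (Var i) s k = (if k < i then Var (i - 1) else if i = k then s else Var i)"
| "subst (App t u) s k = App (subst t s k) (subst u s k)"
| "subst (Abs t) s k = Abs (subst t (lift s 0) (k + 1))"

inductive beta :: "dB \<Rightarrow> dB \<Rightarrow> bool" where
  beta: "beta (App (Abs s) t) (subst s t 0)"
| appL: "beta s t \<Longrightarrow> beta (App s u) (App t u)"
| appR: "beta s t \<Longrightarrow> beta (App u s) (App u t)"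
| abs: "beta s t \<Longrightarrow> beta (Abs s) (Abs t)"

definition beta_eq :: "dB \<Rightarrow> dB \<Rightarrow> bool" where
  "beta_eq = equivclp beta"

primrec fv :: "dB \<Rightarrow> nat set" where
  "fv (Var i) = {i}"
| "fv (App s t) = fv s \<union> fv t"
| "fv (Abs t) = {i. Suc i \<in> fv t}"

definition apps :: "dB \<Rightarrow> dB list \<Rightarrow> dB" where
  "apps M Ps = foldl App M Ps"

definition I_comb :: dB where
  "I_comb = Abs (Var 0)"

text \<open>Y is a fixed point combinator: Y x =beta x (Y x) for a variable x not free in Y
  (stated for every such x; by renaming this is equivalent to "for some such x").\<close>
definition is_fpc :: "dB \<Rightarrow> bool" where
  "is_fpc Y \<longleftrightarrow> (\<forall>x. x \<notin> fv Y \<longrightarrow> beta_eq (App Y (Var x)) (App (Var x) (App Y (Var x))))"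

end

theory Submission
  imports Defs
begin

primrec liftn :: "nat \<Rightarrow> dB \<Rightarrow> nat \<Rightarrow> dB" where
  "liftn n (Var i) k = (if i < k then Var i else Var (i + n))"
| "liftn n (App s t) k = App (liftn n s k) (liftn n t k)"
| "liftn n (Abs s) k = Abs (liftn n s (k + 1))"

lemma liftn_0: "liftn 0 t k = t"
  by (induct t arbitrary: k) auto

lemma lift_liftn: "i \<le> j \<Longrightarrow> j \<le> i + n \<Longrightarrow> lift (liftn n t i) j = liftn (Suc n) t i"
  by (induct t arbitrary: i j) auto

lemma subst_liftn: "i \<le> j \<Longrightarrow> j \<le> i + n \<Longrightarrow> subst (liftn (Suc n) t i) u j = liftn n t i"
  by (induct t arbitrary: i j u) auto

primrec psub :: "(nat \<Rightarrow> dB) \<Rightarrow> nat \<Rightarrow> dB \<Rightarrow> dB" where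
  "psub \<tau> k (Var i) = (if i < k then Var i else liftn k (\<tau> (i - k)) 0)"
| "psub \<tau> k (App s t) = App (psub \<tau> k s) (psub \<tau> k t)"
| "psub \<tau> k (Abs t) = Abs (psub \<tau> (k + 1) t)"

lemma lift_psub: "j \<le> k \<Longrightarrow> lift (psub \<tau> k t) j = psub \<tau> (k + 1) (lift t j)"
  by (induct t arbitrary: k j) (auto simp: lift_liftn)

lemma psub_subst: "j \<le> k \<Longrightarrow> psub \<tau> k (subst s t j) = subst (psub \<tau> (k + 1) s) (psub \<tau> k t) j"
proof (induct s arbitrary: k j t)
  case (Var i)
  then show ?case by (auto simp: subst_liftn)
next
  case (App s1 s2)
  then show ?case by simp
next
  case (Abs s)
  then show ?case by (simp add: lift_psub)
qed

lemma beta_psub: "beta s t \<Longrightarrow> beta (psub \<tau> k s) (psub \<tau> k t)"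
proof (induct s t arbitrary: k rule: beta.induct)
  case (beta s t)
  then show ?case using psub_subst[of 0 k \<tau> s t] by (simp add: beta.beta)
qed (auto intro: beta.intros)

lemma beta_eq_map:
  assumes "\<And>s t. beta s t \<Longrightarrow> beta (f s) (f t)" and "beta_eq s t"
  shows "beta_eq (f s) (f t)"
  using assms(2) unfolding beta_eq_def
proof (induct rule: equivclp_induct)
  case base then show ?case by simp
next
  case (step y z)
  then show ?case using assms(1) by (meson equivclp_into_equivclp)
qed

lemma psub_id: "\<forall>i\<in>fv t. k \<le> i \<longrightarrow> \<tau> (i - k) = Var (i - k) \<Longrightarrow> psub \<tau> k t = t"
proof (induct t arbitrary: k)
  case (Var i) then show ?case by auto
next
  case (App s t) then show ?case by auto
next
  case (Abs t)
  have "\<forall>i\<in>fv t. k + 1 \<le> i \<longrightarrow> \<tau> (i - (k+1)) = Var (i - (k+1))"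
  proof (intro ballI impI)
    fix i assume "i \<in> fv t" "k + 1 \<le> i"
    then have "i - 1 \<in> fv (Abs t)" "k \<le> i - 1" by auto
    then show "\<tau> (i - (k+1)) = Var (i - (k+1))" using Abs.prems by (metis diff_diff_left add.commute)
  qed
  then show ?case using Abs.hyps by simp
qed

lemma psub_apps: "psub \<tau> k (apps M Ps) = apps (psub \<tau> k M) (map (psub \<tau> k) Ps)"
  unfolding apps_def by (induct Ps arbitrary: M) auto

lemma apps_snoc: "apps M (Ps @ [Q]) = App (apps M Ps) Q"
  unfolding apps_def by simp

lemma fv_apps_I: "fv (apps N (replicate m I_comb)) = fv N"
  unfolding apps_def by (induct m arbitrary: N) (auto simp: I_comb_def)

lemma beta_apps: "beta s t \<Longrightarrow> beta (apps s ys) (apps t ys)"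
  unfolding apps_def by (induct ys arbitrary: s t) (auto intro: beta.appL)

lemma I_apps: "beta_eq (apps I_comb (replicate m I_comb @ [t])) t"
proof (induct m)
  case 0
  have "beta (App I_comb t) t" unfolding I_comb_def using beta.beta[of "Var 0" t] by simp
  then show ?case unfolding beta_eq_def apps_def by auto
next
  case (Suc m)
  have "beta (App I_comb I_comb) I_comb" unfolding I_comb_def using beta.beta[of "Var 0" "Abs (Var 0)"] by simp
  then have "beta (apps (App I_comb I_comb) (replicate m I_comb @ [t])) (apps I_comb (replicate m I_comb @ [t]))"
    by (rule beta_apps)
  moreover have "apps I_comb (replicate (Suc m) I_comb @ [t]) = apps (App I_comb I_comb) (replicate m I_comb @ [t])"
    by (simp add: apps_def)
  ultimately show ?case using Suc unfolding beta_eq_def by (metis equivclp_trans r_into_equivclp)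
qed

lemma hd_tl_apps: "beta_eq (apps (hd (replicate m I_comb @ [t])) (tl (replicate m I_comb @ [t]))) t"
proof (cases m)
  case 0 then show ?thesis by (simp add: apps_def beta_eq_def)
next
  case (Suc k)
  then show ?thesis using I_apps[of k t] by (simp add: apps_def)
qed

theorem proposition3p10:
  fixes N :: dB and as :: "nat list" and n :: nat
  assumes "n \<ge> 1"
    and "length as = n"
    and "distinct as"
    and "\<forall>a \<in> set as. a \<notin> fv N"
    and "beta_eq (apps N (map Var as)) (App (apps (Var (hd as)) (map Var (tl as))) (apps N (map Var as)))"
  shows "is_fpc (apps N (replicate (n - 1) I_comb))"
  unfolding is_fpc_def
proof (intro allI impI)
  fix x
  define Y where "Y = apps N (replicate (n - 1) I_comb)"
  assume "x \<notin> fv (apps N (replicate (n - 1) I_comb))"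
  obtain bs c where asd: "as = bs @ [c]" using assms(1,2)
    by (metis One_nat_def Suc_le_length_iff append_butlast_last_id list.simps(3))
  have lbs: "length bs = n - 1" using asd assms(2) by simp
  have cbs: "c \<notin> set bs" using asd assms(3) by simp
  define \<tau> where "\<tau> i = (if i \<in> set bs then I_comb else if i = c then Var x else Var i)" for i
  have mt: "map \<tau> as = replicate (n - 1) I_comb @ [Var x]"
  proof -
    have "map \<tau> bs = map (\<lambda>_. I_comb) bs" by (rule map_cong) (auto simp: \<tau>_def)
    then show ?thesis using asd cbs lbs by (simp add: \<tau>_def map_replicate_const)
  qed
  have mt': "map (psub \<tau> 0) (map Var as) = map \<tau> as" by (simp add: liftn_0)
  have pN: "psub \<tau> 0 N = N"
    by (rule psub_id) (use assms(4) asd in \<open>auto simp: \<tau>_def\<close>)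
  have L: "psub \<tau> 0 (apps N (map Var as)) = App Y (Var x)"
    unfolding psub_apps pN mt' mt Y_def apps_snoc ..
  have "psub \<tau> 0 (apps (Var (hd as)) (map Var (tl as))) = apps (hd (map \<tau> as)) (tl (map \<tau> as))"
    using assms(1,2) by (cases as) (auto simp: psub_apps liftn_0 comp_def)
  then have R: "psub \<tau> 0 (App (apps (Var (hd as)) (map Var (tl as))) (apps N (map Var as)))
      = App (apps (hd (replicate (n - 1) I_comb @ [Var x])) (tl (replicate (n - 1) I_comb @ [Var x]))) (App Y (Var x))"
    using L mt by simp
  have "beta_eq (App Y (Var x)) (App (apps (hd (replicate (n - 1) I_comb @ [Var x])) (tl (replicate (n - 1) I_comb @ [Var x]))) (App Y (Var x)))"
    using beta_eq_map[where f="psub \<tau> 0", OF beta_psub assms(5)] L R by simp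
  moreover have "beta_eq (App (apps (hd (replicate (n - 1) I_comb @ [Var x])) (tl (replicate (n - 1) I_comb @ [Var x]))) (App Y (Var x))) (App (Var x) (App Y (Var x)))"
    by (rule beta_eq_map[OF _ hd_tl_apps, of "\<lambda>s. App s (App Y (Var x))"]) (rule beta.appL)
  ultimately show "beta_eq (App (apps N (replicate (n - 1) I_comb)) (Var x)) (App (Var x) (App (apps N (replicate (n - 1) I_comb)) (Var x)))"
    unfolding Y_def beta_eq_def by (metis equivclp_trans)
qed

end
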